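(* Let $f=a_1+2a_2+4a_3+8a_4\in\mathcal{GB}_n^{16}$ with $a_1,\dots,a_4\in\mathcal{B}_n$. If $f$ is gbent, then its Gray image $\psi(f)(\mathbf{x},y_1,y_2,y_3)=y_1a_1(\mathbf{x})\oplus y_2a_2(\mathbf{x})\oplus y_3a_3(\mathbf{x})\oplus a_4(\mathbf{x})\in\mathcal{B}_{n+3}$ is semibent if $n$ is odd, and $3$-plateaued if $n$ is even.
   Context: $\mathcal{B}_m$: Boolean functions $\mathbb{F}_2^m\to\mathbb{F}_2$; $\mathcal{GB}_n^q$: functions $\mathbb{F}_2^n\to\mathbb{Z}_q$ (Boolean values viewed as integers, sum in $\mathbb{Z}_{16}$). $\mathcal{H}^{(q)}_f(\mathbf{u})=\sum_{\mathbf{x}}\zeta_q^{f(\mathbf{x})}(-1)^{\mathbf{u}\cdot\mathbf{x}}$ with $\zeta_q=e^{2\pi i/q}$; $f$ is gbent if $|\mathcal{H}^{(q)}_f(\mathbf{u})|=2^{n/2}$ for all $\mathbf{u}$. $\mathcal{W}_g(\mathbf{w})=\sum_{\mathbf{z}}(-1)^{g(\mathbf{z})+\mathbf{w}\cdot\mathbf{z}}$. A Boolean function $g$ on $\mathbb{F}_2^m$ is $s$-plateaued if $|\mathcal{W}_g(\mathbf{w})|\in\{0,2^{(m+s)/2}\}$ for all $\mathbf{w}$; it is semibent if it is $1$-plateaued ($m$ odd) or $2$-plateaued ($m$ even). *)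

theory Defs
  imports Complex_Main
begin

text \<open>Vectors of F_2^m are bool lists of length m (True = 1).\<close>
definition vecs :: "nat \<Rightarrow> bool list set" where
  "vecs m = {xs. length xs = m}"

definition dotp :: "bool list \<Rightarrow> bool list \<Rightarrow> bool" where
  "dotp u x = odd (card {i. i < length x \<and> i < length u \<and> u ! i \<and> x ! i})"

definition walsh :: "nat \<Rightarrow> (bool list \<Rightarrow> bool) \<Rightarrow> bool list \<Rightarrow> int" where
  "walsh m g w = (\<Sum>z\<in>vecs m. (-1::int) ^ (of_bool (g z) + of_bool (dotp w z)))"

definition plateaued :: "nat \<Rightarrow> nat \<Rightarrow> (bool list \<Rightarrow> bool) \<Rightarrow> bool" where
  "plateaued m s g \<longleftrightarrow>
     (\<forall>w\<in>vecs m. \<bar>real_of_int (walsh m g w)\<bar> \<in> {0, 2 powr ((real m + real s) / 2)})"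

definition semibent :: "nat \<Rightarrow> (bool list \<Rightarrow> bool) \<Rightarrow> bool" where
  "semibent m g \<longleftrightarrow> (if odd m then plateaued m 1 g else plateaued m 2 g)"

definition gwalsh :: "nat \<Rightarrow> nat \<Rightarrow> (bool list \<Rightarrow> nat) \<Rightarrow> bool list \<Rightarrow> complex" where
  "gwalsh n q f u = (\<Sum>x\<in>vecs n. cis (2 * pi * real (f x mod q) / real q)
                         * (-1) ^ (of_bool (dotp u x)))"

definition gbent :: "nat \<Rightarrow> nat \<Rightarrow> (bool list \<Rightarrow> nat) \<Rightarrow> bool" where
  "gbent n q f \<longleftrightarrow> (\<forall>u\<in>vecs n. cmod (gwalsh n q f u) = 2 powr (real n / 2))"

text \<open>Gray image psi(f)(x,y1,y2,y3) on F_2^{n+3}; z = x @ [y1,y2,y3].\<close>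
definition gray16 :: "nat \<Rightarrow> (bool list \<Rightarrow> bool) \<Rightarrow> (bool list \<Rightarrow> bool) \<Rightarrow> (bool list \<Rightarrow> bool)
    \<Rightarrow> (bool list \<Rightarrow> bool) \<Rightarrow> bool list \<Rightarrow> bool" where
  "gray16 n a1 a2 a3 a4 z =
     (let x = take n z; y = drop n z in
      ((y ! 0 \<and> a1 x) \<noteq> (y ! 1 \<and> a2 x)) \<noteq> ((y ! 2 \<and> a3 x) \<noteq> a4 x))"

end

theory Submission
  imports Defs
begin


lemma sq2_int: fixes a b :: int assumes "a^2 = 2 * b^2" shows "b = 0"
proof -
  have "\<forall>a b::int. nat \<bar>b\<bar> = k \<longrightarrow> a^2 = 2*b^2 \<longrightarrow> b = 0" for k
  proof (induction k rule: less_induct)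
    case (less k)
    show ?case
    proof (intro allI impI)
      fix a b :: int assume k: "nat \<bar>b\<bar> = k" and e: "a^2 = 2*b^2"
      show "b = 0"
      proof (rule ccontr)
        assume b0: "b \<noteq> 0"
        have "even (a^2)" using e by simp
        then have "even a" by simp
        then obtain a' where a': "a = 2*a'" by blast
        then have "b^2 = 2*a'^2" using e by (simp add: power2_eq_square)
        then have "even (b^2)" by simp
        then have "even b" by simp
        then obtain b' where b': "b = 2*b'" by blast
        have e2: "a'^2 = 2*b'^2" using \<open>b^2 = 2*a'^2\<close> b' by (simp add: power2_eq_square)
        have "nat \<bar>b'\<bar> < k" using k b' b0 by auto
        then have "b' = 0" using less.IH e2 by blast
        then show False using b' b0 by simp
      qed
    qed
  qed
  then show ?thesis using assms by blast
qed

lemma sqrt2_indep: fixes x y :: int assumes "of_int x + of_int y * sqrt 2 = (0::real)" shows "x = 0 \<and> y = 0"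
proof -
  have "of_int x = - of_int y * sqrt 2" using assms by linarith
  then have "(of_int x)^2 = (of_int y)^2 * (sqrt 2)^2" by (simp add: power_mult_distrib)
  then have "(of_int x)^2 = (2::real) * (of_int y)^2" by simp
  then have "x^2 = 2 * y^2" by (metis of_int_eq_iff of_int_mult of_int_numeral of_int_power)
  then have "y = 0" by (rule sq2_int)
  then show ?thesis using assms by simp
qed

lemma int_sys: fixes X1 X2 Y1 Y2 :: int
  assumes e1: "2*X1^2+4*X2^2+4*X1*X2 = Y1^2+2*Y2^2" and e2: "X1^2+2*X2^2+4*X1*X2 = 2*Y1*Y2"
  shows "X1 = 0 \<and> X2 = 0 \<and> Y1 = 0 \<and> Y2 = 0"
proof -
  have "(Y1^2 - 2*Y2^2)^2 = (Y1^2+2*Y2^2)^2 - 2*(2*Y1*Y2)^2" by algebra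
  also have "\<dots> = (2*X1^2+4*X2^2+4*X1*X2)^2 - 2*(X1^2+2*X2^2+4*X1*X2)^2" using e1 e2 by simp
  also have "\<dots> = 2 * (X1^2 - 2*X2^2)^2" by algebra
  finally have "X1^2 - 2*X2^2 = 0" using sq2_int[of "Y1^2 - 2*Y2^2" "X1^2 - 2*X2^2"] by simp
  then have "X1^2 = 2 * X2^2" by simp
  then have x2: "X2 = 0" by (rule sq2_int)
  then have x1: "X1 = 0" using \<open>X1^2 = 2 * X2^2\<close> by simp
  have "Y1^2 + 2*Y2^2 = 0" using e1 x1 x2 by simp
  moreover have "Y1^2 \<ge> 0" "Y2^2 \<ge> 0" by auto
  ultimately have "Y1^2 = 0" "Y2^2 = 0" by linarith+
  then show ?thesis using x1 x2 by simp
qed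

definition ca :: real where "ca = cos (pi/8)"
definition cs :: real where "cs = sin (pi/8)"

lemma ca_pos: "ca > 0" unfolding ca_def by (rule cos_gt_zero) (auto simp: pi_gt_zero)

lemma ca_sq: "4 * ca^2 = 2 + sqrt 2"
proof -
  have "cos (2*(pi/8)) = 2 * ca^2 - 1" unfolding ca_def by (rule cos_double_cos)
  moreover have "2*(pi/8) = pi/4" by simp
  ultimately show ?thesis using cos_45 by simp
qed

lemma cs_ca: "4 * ca * cs = sqrt 2"
proof -
  have "sin (2*(pi/8)) = 2 * cs * ca" unfolding ca_def cs_def by (rule sin_double)
  moreover have "2*(pi/8) = pi/4" by simp
  ultimately show ?thesis using sin_45 by simp
qed

lemma trig_indep: fixes p q r s :: int
  assumes "of_int p + of_int q * ca + of_int r * (sqrt 2 / 2) + of_int s * cs = 0"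
  shows "p = 0 \<and> q = 0 \<and> r = 0 \<and> s = 0"
proof -
  define R where "R = sqrt 2"
  have R2: "R^2 = 2" unfolding R_def by simp
  have a2: "4*ca^2 = 2 + R" using ca_sq R_def by simp
  have ac: "4*ca*cs = R" using cs_ca R_def by simp
  have "4*ca*(of_int p + of_int q * ca + of_int r * (R / 2) + of_int s * cs) = 0" using assms R_def by simp
  then have "4*ca*of_int p + of_int q * (4*ca^2) + 2*of_int r * R * ca + of_int s * (4*ca*cs) = 0"
    by (simp add: algebra_simps power2_eq_square)
  then have "4*ca*of_int p + of_int q * (2+R) + 2*of_int r * R * ca + of_int s * R = 0"
    using a2 ac by simp
  then have "2*ca*(2*of_int p + of_int r * R) = -(2*of_int q + (of_int q + of_int s)*R)"
    by (simp add: algebra_simps)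
  then have "(2*ca*(2*of_int p + of_int r * R))^2 = (2*of_int q + (of_int q + of_int s)*R)^2"
    by (metis power2_minus)
  then have "(4*ca^2)*(2*of_int p + of_int r * R)^2 = (2*of_int q + (of_int q + of_int s)*R)^2"
    by (simp add: power_mult_distrib)
  then have eq: "(2+R)*(2*of_int p + of_int r * R)^2 = (2*of_int q + (of_int q + of_int s)*R)^2"
    using a2 by simp
  have RR: "R*R = 2" using R2 by (simp add: power2_eq_square)
  have gen: "(2+R)*(X1 + X2*R)^2 - (Y1 + Y2*R)^2 =
      (2*X1^2+4*X2^2+4*X1*X2 - (Y1^2+2*Y2^2)) + (X1^2+2*X2^2+4*X1*X2 - 2*Y1*Y2) * R" for X1 X2 Y1 Y2 :: real
  proof -
    have "(2+R)*(X1 + X2*R)^2 - (Y1 + Y2*R)^2 = 2*X1^2 + 2*X2^2*(R*R) + 4*X1*X2*R + R*X1^2 + X2^2*(R*R)*R + 2*X1*X2*(R*R) - (Y1^2 + 2*Y1*Y2*R + Y2^2*(R*R))"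
      by (simp add: power2_eq_square algebra_simps)
    also have "... = (2*X1^2+4*X2^2+4*X1*X2 - (Y1^2+2*Y2^2)) + (X1^2+2*X2^2+4*X1*X2 - 2*Y1*Y2) * R"
      unfolding RR by (simp add: algebra_simps)
    finally show ?thesis .
  qed
  have "(2*(2*p)^2+4*r^2+4*(2*p)*r - ((2*q)^2+2*(q+s)^2))
      + ((2*p)^2+2*r^2+4*(2*p)*r - 2*(2*q)*(q+s)) * sqrt 2 = 0"
    using gen[of "2*of_int p" "of_int r" "2*of_int q" "of_int q + of_int s"] eq R_def by simp
  then have "2*(2*p)^2+4*r^2+4*(2*p)*r - ((2*q)^2+2*(q+s)^2) = 0 \<and> (2*p)^2+2*r^2+4*(2*p)*r - 2*(2*q)*(q+s) = 0"
    using sqrt2_indep[of "2*(2*p)^2+4*r^2+4*(2*p)*r - ((2*q)^2+2*(q+s)^2)" "(2*p)^2+2*r^2+4*(2*p)*r - 2*(2*q)*(q+s)"] by simp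
  then have "2*p = 0 \<and> r = 0 \<and> 2*q = 0 \<and> q+s = 0"
    using int_sys[of "2*p" r "2*q" "q+s"] by (simp add: algebra_simps)
  then show ?thesis by simp
qed

definition zeta :: complex where "zeta = cis (pi/8)"
definition E :: "(nat \<Rightarrow> int) \<Rightarrow> complex" where "E c = (\<Sum>t<8. of_int (c t) * zeta ^ t)"

lemma E_expand: "E c = of_int (c 0) + of_int (c 1) * zeta + of_int (c 2) * zeta^2 + of_int (c 3) * zeta^3
   + of_int (c 4) * zeta^4 + of_int (c 5) * zeta^5 + of_int (c 6) * zeta^6 + of_int (c 7) * zeta^7"
  unfolding E_def by (simp add: eval_nat_numeral)

lemma zeta_pow: "zeta ^ k = cis (real k * pi / 8)"
  unfolding zeta_def DeMoivre by simp

lemma zeta8: "zeta^8 = -1" unfolding zeta_pow by simp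
lemma zeta4: "zeta^4 = \<i>" unfolding zeta_pow by simp
lemma zeta2: "zeta^2 = Complex (sqrt 2/2) (sqrt 2/2)"
  unfolding zeta_pow by (simp add: complex_eq_iff cos_45 sin_45)
lemma zeta1: "zeta = Complex ca cs" unfolding zeta_def ca_def cs_def by (simp add: complex_eq_iff)
lemma zeta_cnj: "cnj zeta * zeta = 1" unfolding zeta_def by (simp add: cis_cnj cis_mult)
lemma zeta3: "zeta^3 = Complex cs ca"
proof -
  have "zeta^3 = zeta^4 * (cnj zeta * zeta) * cnj zeta"
    using zeta_cnj by (simp add: eval_nat_numeral algebra_simps)
  also have "\<dots> = \<i> * cnj zeta" using zeta4 zeta_cnj by simp
  finally show ?thesis by (simp add: zeta1 complex_eq_iff)
qed
lemma zeta5: "zeta^5 = Complex (-cs) ca"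
proof -
  have "zeta^5 = zeta^4 * zeta" by (simp add: eval_nat_numeral)
  also have "\<dots> = \<i> * zeta" by (simp only: zeta4)
  finally show ?thesis by (simp add: zeta1 complex_eq_iff)
qed
lemma zeta6: "zeta^6 = Complex (-(sqrt 2/2)) (sqrt 2/2)"
proof -
  have "zeta^6 = zeta^4 * zeta^2" by (simp add: eval_nat_numeral)
  then show ?thesis by (simp add: zeta4 zeta2 complex_eq_iff)
qed
lemma zeta7: "zeta^7 = Complex (-ca) cs"
proof -
  have "zeta^7 = zeta^4 * zeta^3" by (simp add: eval_nat_numeral)
  then show ?thesis by (simp add: zeta4 zeta3 complex_eq_iff)
qed

lemma E_complex: "E c = Complex
   (of_int (c 0) + of_int (c 1 - c 7) * ca + of_int (c 2 - c 6) * (sqrt 2/2) + of_int (c 3 - c 5) * cs)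
   (of_int (c 4) + of_int (c 3 + c 5) * ca + of_int (c 2 + c 6) * (sqrt 2/2) + of_int (c 1 + c 7) * cs)"
  unfolding E_expand zeta2 zeta3 zeta4 zeta5 zeta6 zeta7
  by (simp add: complex_eq_iff zeta1 algebra_simps)

lemma E_zero: assumes "E c = 0" shows "\<forall>t<8. c t = 0"
proof -
  have r: "of_int (c 0) + of_int (c 1 - c 7) * ca + of_int (c 2 - c 6) * (sqrt 2/2) + of_int (c 3 - c 5) * cs = 0"
    using assms unfolding E_complex by (simp add: complex_eq_iff)
  have i: "of_int (c 4) + of_int (c 3 + c 5) * ca + of_int (c 2 + c 6) * (sqrt 2/2) + of_int (c 1 + c 7) * cs = 0"
    using assms unfolding E_complex by (simp add: complex_eq_iff)
  from trig_indep[OF r] trig_indep[OF i] have "c 0 = 0 \<and> c 1 = 0 \<and> c 2 = 0 \<and> c 3 = 0 \<and> c 4 = 0 \<and> c 5 = 0 \<and> c 6 = 0 \<and> c 7 = 0"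
    by auto
  then show ?thesis by (auto simp: less_Suc_eq numeral_eq_Suc)
qed

lemma E_diff: "E c - E d = E (\<lambda>t. c t - d t)"
  unfolding E_def by (simp add: sum_subtractf algebra_simps)

lemma E_inj: assumes "E c = E d" shows "\<forall>t<8. c t = d t"
  using E_zero[of "\<lambda>t. c t - d t"] assms E_diff[of c d] by simp
lemma poly_mul8: fixes x A0 A1 A2 A3 A4 A5 A6 A7 B0 B1 B2 B3 B4 B5 B6 B7 :: complex shows "(A0*x^0 + A1*x^1 + A2*x^2 + A3*x^3 + A4*x^4 + A5*x^5 + A6*x^6 + A7*x^7) * (B0*x^0 + B1*x^1 + B2*x^2 + B3*x^3 + B4*x^4 + B5*x^5 + B6*x^6 + B7*x^7) = (A0*B0 - A1*B7 - A2*B6 - A3*B5 - A4*B4 - A5*B3 - A6*B2 - A7*B1)*x^0 + (A0*B1 + A1*B0 - A2*B7 - A3*B6 - A4*B5 - A5*B4 - A6*B3 - A7*B2)*x^1 + (A0*B2 + A1*B1 + A2*B0 - A3*B7 - A4*B6 - A5*B5 - A6*B4 - A7*B3)*x^2 + (A0*B3 + A1*B2 + A2*B1 + A3*B0 - A4*B7 - A5*B6 - A6*B5 - A7*B4)*x^3 + (A0*B4 + A1*B3 + A2*B2 + A3*B1 + A4*B0 - A5*B7 - A6*B6 - A7*B5)*x^4 + (A0*B5 + A1*B4 + A2*B3 + A3*B2 + A4*B1 + A5*B0 - A6*B7 - A7*B6)*x^5 + (A0*B6 + A1*B5 + A2*B4 + A3*B3 + A4*B2 + A5*B1 + A6*B0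 - A7*B7)*x^6 + (A0*B7 + A1*B6 + A2*B5 + A3*B4 + A4*B3 + A5*B2 + A6*B1 + A7*B0)*x^7 + (x^8+1)*(A1*B7*x^0 + A2*B6*x^0 + A2*B7*x^1 + A3*B5*x^0 + A3*B6*x^1 + A3*B7*x^2 + A4*B4*x^0 + A4*B5*x^1 + A4*B6*x^2 + A4*B7*x^3 + A5*B3*x^0 + A5*B4*x^1 + A5*B5*x^2 + A5*B6*x^3 + A5*B7*x^4 + A6*B2*x^0 + A6*B3*x^1 + A6*B4*x^2 + A6*B5*x^3 + A6*B6*x^4 + A6*B7*x^5 + A7*B1*x^0 + A7*B2*x^1 + A7*B3*x^2 + A7*B4*x^3 + A7*B5*x^4 + A7*B6*x^5 + A7*B7*x^6)" by algebra
lemma poly_eta: fixes x :: complex shows "(1-x)^8 * ((0)*x^0 + (-356)*x^1 + (-658)*x^2 + (-860)*x^3 + (-931)*x^4 + (-860)*x^5 + (-658)*x^6 + (-356)*x^7) = 2 + (x^8+1)*((-2)*x^0 + (-356)*x^1 + (2190)*x^2 + (-5564)*x^3 + (7461)*x^4 + (-5564)*x^5 + (2190)*x^6 + (-356)*x^7)" by algebra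
definition mulc :: "(nat \<Rightarrow> int) \<Rightarrow> (nat \<Rightarrow> int) \<Rightarrow> nat \<Rightarrow> int" where
  "mulc a b d = (if d = 0 then a 0 * b 0 - a 1 * b 7 - a 2 * b 6 - a 3 * b 5 - a 4 * b 4 - a 5 * b 3 - a 6 * b 2 - a 7 * b 1 else  (if d = 1 then a 0 * b 1 + a 1 * b 0 - a 2 * b 7 - a 3 * b 6 - a 4 * b 5 - a 5 * b 4 - a 6 * b 3 - a 7 * b 2 else  (if d = 2 then a 0 * b 2 + a 1 * b 1 + a 2 * b 0 - a 3 * b 7 - a 4 * b 6 - a 5 * b 5 - a 6 * b 4 - a 7 * b 3 else  (if d = 3 then a 0 * b 3 + a 1 * b 2 + a 2 * b 1 + a 3 * b 0 - a 4 * b 7 - a 5 * b 6 - a 6 * b 5 - a 7 * b 4 else  (if d = 4 then a 0 * b 4 + a 1 * b 3 + a 2 * b 2 + a 3 * b 1 + a 4 * b 0 - a 5 * b 7 - a 6 * b 6 - a 7 * b 5 else  (if d = 5 then a 0 * b 5 + a 1 * b 4 + a 2 * b 3 + a 3 * b 2 + a 4 * b 1 + a 5 * b 0 - a 6 * b 7 - a 7 * b 6 else  (if d = 6 then a 0 * b 6 + a 1 * b 5 + a 2 * b 4 + a 3 * b 3 + a 4 * b 2 + a 5 * b 1 + a 6 * b 0 - a 7 * b 7 else  (if d = 7 then a 0 * b 7 + a 1 * b 6 + a 2 * b 5 + a 3 * b 4 + a 4 * b 3 + a 5 * b 2 + a 6 * b 1 + a 7 * b 0 else 0))))))))"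

lemma E_mul: "E a * E b = E (mulc a b)"
proof -
  note h = poly_mul8[of "of_int (a 0)" zeta "of_int (a 1)" "of_int (a 2)" "of_int (a 3)" "of_int (a 4)" "of_int (a 5)" "of_int (a 6)" "of_int (a 7)" "of_int (b 0)" "of_int (b 1)" "of_int (b 2)" "of_int (b 3)" "of_int (b 4)" "of_int (b 5)" "of_int (b 6)" "of_int (b 7)"]
  show ?thesis unfolding E_expand using h by (simp add: mulc_def zeta8)
qed

lemma E_add: "E a + E b = E (\<lambda>t. a t + b t)"
  unfolding E_def by (simp add: sum.distrib algebra_simps)
lemma E_uminus: "- E a = E (\<lambda>t. - a t)"
  unfolding E_def by (simp add: sum_negf)
lemma E_const: "E (\<lambda>t. if t = 0 then k else 0) = of_int k"
  unfolding E_expand by simp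
lemma E_cong: "(\<And>t. t < 8 \<Longrightarrow> a t = b t) \<Longrightarrow> E a = E b"
  unfolding E_def by simp

lemma cnj_zeta_pow: assumes "t \<le> 8" shows "(cnj zeta) ^ t = - (zeta ^ (8 - t))"
proof -
  have a: "cnj zeta ^ t * zeta ^ t = 1" using zeta_cnj by (metis power_mult_distrib power_one)
  have b: "zeta ^ t * zeta ^ (8 - t) = -1" using assms zeta8 by (simp add: power_add[symmetric])
  have "cnj zeta ^ t = cnj zeta ^ t * (- (zeta ^ t * zeta ^ (8 - t)))" using b by simp
  also have "\<dots> = - ((cnj zeta ^ t * zeta ^ t) * zeta ^ (8 - t))" by (simp add: algebra_simps)
  finally show ?thesis using a by simp
qed

definition cjc :: "(nat \<Rightarrow> int) \<Rightarrow> nat \<Rightarrow> int" where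
  "cjc c t = (if t = 0 then c 0 else - c (8 - t))"

lemma cz: "1 \<le> t \<Longrightarrow> t \<le> 8 \<Longrightarrow> cnj (zeta ^ t) = - (zeta ^ (8 - t))"
  using cnj_zeta_pow by simp

lemma sum8: "(\<Sum>t<8. f t) = f 0 + f 1 + f 2 + f 3 + f 4 + f 5 + f 6 + f (7::nat)"
  by (simp add: eval_nat_numeral add.assoc)

lemma E_cnj: "cnj (E c) = E (cjc c)"
proof -
  have c1: "cnj (zeta ^ 1) = - (zeta ^ 7)" using cz[of 1] by simp
  have c2: "cnj (zeta ^ 2) = - (zeta ^ 6)" using cz[of 2] by simp
  have c3: "cnj (zeta ^ 3) = - (zeta ^ 5)" using cz[of 3] by simp
  have c4: "cnj (zeta ^ 4) = - (zeta ^ 4)" using cz[of 4] by simp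
  have c5: "cnj (zeta ^ 5) = - (zeta ^ 3)" using cz[of 5] by simp
  have c6: "cnj (zeta ^ 6) = - (zeta ^ 2)" using cz[of 6] by simp
  have c7: "cnj (zeta ^ 7) = - (zeta ^ 1)" using cz[of 7] by simp
  have "cnj (E c) = (\<Sum>t<8. of_int (c t) * cnj (zeta ^ t))" unfolding E_def by (simp del: complex_cnj_power)
  also have "\<dots> = of_int (c 0) * cnj (zeta ^ 0) + of_int (c 1) * cnj (zeta ^ 1) + of_int (c 2) * cnj (zeta ^ 2)
     + of_int (c 3) * cnj (zeta ^ 3) + of_int (c 4) * cnj (zeta ^ 4) + of_int (c 5) * cnj (zeta ^ 5)
     + of_int (c 6) * cnj (zeta ^ 6) + of_int (c 7) * cnj (zeta ^ 7)"
    by (rule sum8)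
  also have "\<dots> = E (cjc c)"
    unfolding c1 c2 c3 c4 c5 c6 c7 E_expand cjc_def by simp
  finally show ?thesis .
qed

definition ZZ :: "complex set" where "ZZ = range E"
definition pi1 :: complex where "pi1 = 1 - zeta"

lemma ZZ_E[simp]: "E c \<in> ZZ" unfolding ZZ_def by simp
lemma ZZ_add: "a \<in> ZZ \<Longrightarrow> b \<in> ZZ \<Longrightarrow> a + b \<in> ZZ"
  unfolding ZZ_def using E_add by auto
lemma ZZ_mult: "a \<in> ZZ \<Longrightarrow> b \<in> ZZ \<Longrightarrow> a * b \<in> ZZ"
  unfolding ZZ_def using E_mul by auto
lemma ZZ_uminus: "a \<in> ZZ \<Longrightarrow> - a \<in> ZZ"
  unfolding ZZ_def using E_uminus by auto
lemma ZZ_diff: "a \<in> ZZ \<Longrightarrow> b \<in> ZZ \<Longrightarrow> a - b \<in> ZZ"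
  using ZZ_add ZZ_uminus by (metis diff_conv_add_uminus)
lemma ZZ_int: "of_int k \<in> ZZ"
  using E_const[of k] ZZ_E by metis
lemma ZZ_cnj: "a \<in> ZZ \<Longrightarrow> cnj a \<in> ZZ"
  unfolding ZZ_def using E_cnj by auto
lemma ZZ_zeta: "zeta \<in> ZZ"
proof -
  have "zeta = E (\<lambda>t. if t = 1 then 1 else 0)" unfolding E_expand by simp
  then show ?thesis by (metis ZZ_E)
qed
lemma ZZ_pow: "a \<in> ZZ \<Longrightarrow> a ^ k \<in> ZZ"
  by (induction k) (use ZZ_int[of 1] ZZ_mult in auto)
lemma ZZ_pi1: "pi1 \<in> ZZ" unfolding pi1_def using ZZ_int[of 1] ZZ_zeta ZZ_diff by simp

definition mulpi :: "(nat \<Rightarrow> int) \<Rightarrow> nat \<Rightarrow> int" where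
  "mulpi r t = (if t = 0 then r 0 + r 7 else r t - r (t - 1))"

lemma poly_pi: fixes x R0 R1 R2 R3 R4 R5 R6 R7 :: complex
  shows "(1-x)*(R0 + R1*x + R2*x^2 + R3*x^3 + R4*x^4 + R5*x^5 + R6*x^6 + R7*x^7)
    = (R0+R7) + (R1-R0)*x + (R2-R1)*x^2 + (R3-R2)*x^3 + (R4-R3)*x^4 + (R5-R4)*x^5 + (R6-R5)*x^6 + (R7-R6)*x^7 - R7*(x^8+1)"
  by algebra

lemma pi1_E: "pi1 * E r = E (mulpi r)"
  unfolding pi1_def E_expand poly_pi mulpi_def by (simp add: zeta8)

lemma not_pdiv_one: "\<not> (\<exists>w\<in>ZZ. 1 = pi1 * w)"
proof
  assume "\<exists>w\<in>ZZ. 1 = pi1 * w"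
  then obtain r where "1 = pi1 * E r" unfolding ZZ_def by auto
  then have "E (\<lambda>t. if t = 0 then 1 else 0) = E (mulpi r)" using E_const[of 1] pi1_E by simp
  from E_inj[OF this] have h: "\<forall>t<8. (if t = 0 then 1 else 0) = mulpi r t" by simp
  have "r 0 + r 7 = 1" using h[rule_format, of 0] by (simp add: mulpi_def)
  moreover have "r 1 = r 0" "r 2 = r 1" "r 3 = r 2" "r 4 = r 3" "r 5 = r 4" "r 6 = r 5" "r 7 = r 6"
    using h[rule_format, of 1] h[rule_format, of 2] h[rule_format, of 3] h[rule_format, of 4]
      h[rule_format, of 5] h[rule_format, of 6] h[rule_format, of 7] by (simp_all add: mulpi_def)
  ultimately have "2 * r 0 = 1" by simp
  then show False by presburger
qed

lemma div_even: assumes "even (\<Sum>t<8. c t)" shows "\<exists>r. E c = pi1 * E r"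
proof -
  define h where "h = (\<Sum>t<8. c t) div 2"
  define r where "r t = (\<Sum>k\<le>t. c k) - h" for t
  have "E (mulpi r) = E c"
  proof (rule E_cong)
    fix t :: nat assume t: "t < 8"
    show "mulpi r t = c t"
    proof (cases "t = 0")
      case True
      have "(\<Sum>t<8. c t) = 2 * h" using assms h_def by simp
      moreover have "(\<Sum>k\<le>7. c k) = (\<Sum>t<8. c t)" by (simp add: lessThan_Suc_atMost[symmetric])
      ultimately show ?thesis using True by (simp add: mulpi_def r_def)
    next
      case False
      then obtain u where u: "t = Suc u" by (cases t) auto
      then show ?thesis by (simp add: mulpi_def r_def)
    qed
  qed
  then show ?thesis using pi1_E by metis
qed

definition Uf :: "complex \<Rightarrow> bool" where "Uf z \<longleftrightarrow> (\<exists>w\<in>ZZ. z = 1 + pi1 * w)"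
definition pdiv :: "complex \<Rightarrow> bool" where "pdiv z \<longleftrightarrow> (\<exists>w\<in>ZZ. z = pi1 * w)"

lemma ZZ_split: assumes "z \<in> ZZ" shows "pdiv z \<or> Uf z"
proof -
  obtain c where c: "z = E c" using assms ZZ_def by auto
  show ?thesis
  proof (cases "even (\<Sum>t<8. c t)")
    case True
    then show ?thesis using div_even c pdiv_def by fastforce
  next
    case False
    define c' where "c' t = c t - (if t = 0 then 1 else 0)" for t
    have "(\<Sum>t<8. c' t) = (\<Sum>t<8. c t) - 1" unfolding c'_def by (simp add: sum_subtractf)
    then have "even (\<Sum>t<8. c' t)" using False by simp
    then obtain r where "E c' = pi1 * E r" using div_even by blast
    moreover have "E c' = z - 1" unfolding c c'_def using E_diff[of c "\<lambda>t. if t = 0 then 1 else 0"] E_const[of 1] by simp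
    ultimately show ?thesis unfolding Uf_def by (metis ZZ_E add.commute diff_add_cancel)
  qed
qed

lemma Uf_not_pdiv: "Uf z \<Longrightarrow> \<not> pdiv z"
proof
  assume "Uf z" "pdiv z"
  from \<open>Uf z\<close> obtain w where w: "w \<in> ZZ" "z = 1 + pi1 * w" unfolding Uf_def by blast
  from \<open>pdiv z\<close> obtain w' where w': "w' \<in> ZZ" "z = pi1 * w'" unfolding pdiv_def by blast
  have "1 = pi1 * (w' - w)" using w(2) w'(2) by (simp add: algebra_simps)
  then show False using not_pdiv_one ZZ_diff w w' by blast
qed

lemma Uf_mult: "Uf a \<Longrightarrow> Uf b \<Longrightarrow> Uf (a * b)"
proof -
  assume "Uf a" "Uf b"
  then obtain w w' where w: "w \<in> ZZ" "a = 1 + pi1 * w" and w': "w' \<in> ZZ" "b = 1 + pi1 * w'"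
    unfolding Uf_def by blast
  have "a * b = 1 + pi1 * (w + w' + pi1 * w * w')" using w w' by (simp add: algebra_simps)
  moreover have "w + w' + pi1 * w * w' \<in> ZZ" using w w' ZZ_pi1 ZZ_add ZZ_mult by simp
  ultimately show ?thesis unfolding Uf_def by blast
qed

lemma Uf_zeta: "Uf zeta"
  unfolding Uf_def pi1_def using ZZ_int[of "-1"] by (intro bexI[of _ "-1"]) auto

lemma Uf_pow: "Uf a \<Longrightarrow> Uf (a ^ k)"
proof (induction k)
  case 0 then show ?case unfolding Uf_def using ZZ_int[of 0] by (intro bexI[of _ 0]) auto
next
  case (Suc k) then show ?case using Uf_mult by simp
qed

lemma zeta16: "zeta ^ 16 = 1"
proof -
  have "zeta^16 = (zeta^8)^2" by (simp add: power_mult[symmetric])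
  then show ?thesis using zeta8 by simp
qed

lemma cnj_pi1: "cnj pi1 = pi1 * zeta ^ 7"
proof -
  have c: "cnj zeta = -(zeta ^ 7)" using cnj_zeta_pow[of 1] by simp
  have "pi1 * zeta^7 = zeta^7 - zeta^8" unfolding pi1_def by (simp add: algebra_simps eval_nat_numeral)
  then show ?thesis unfolding pi1_def using c zeta8 by simp
qed

lemma Uf_cnj: "Uf z \<Longrightarrow> Uf (cnj z)"
proof -
  assume "Uf z"
  then obtain w where w: "w \<in> ZZ" "z = 1 + pi1 * w" unfolding Uf_def by auto
  have "cnj z = 1 + pi1 * (zeta^7 * cnj w)" using w cnj_pi1 by (simp add: algebra_simps)
  moreover have "zeta^7 * cnj w \<in> ZZ" using ZZ_mult ZZ_pow ZZ_zeta ZZ_cnj w by simp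
  ultimately show ?thesis unfolding Uf_def by blast
qed

definition etac :: complex where
  "etac = (-356)*zeta + (-658)*zeta^2 + (-860)*zeta^3 + (-931)*zeta^4 + (-860)*zeta^5 + (-658)*zeta^6 + (-356)*zeta^7"

lemma two_eq: "2 = pi1^8 * etac"
  using poly_eta[of zeta] unfolding pi1_def etac_def zeta8 by simp

lemma ZZ_etac: "etac \<in> ZZ"
proof -
  have "etac = E (\<lambda>t. [0, -356, -658, -860, -931, -860, -658, -356] ! t)"
    unfolding etac_def E_expand by simp
  then show ?thesis by (metis ZZ_E)
qed

lemma pi8_eq: "pi1^8 = 2 * E (\<lambda>t. [0, -4, 14, -28, 35, -28, 14, -4] ! t)"
proof -
  have "(1 - zeta)^8 = 2 * ((-4)*zeta + 14*zeta^2 + (-28)*zeta^3 + 35*zeta^4 + (-28)*zeta^5 + 14*zeta^6 + (-4)*zeta^7) + (zeta^8 + 1)"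
    by algebra
  then show ?thesis unfolding pi1_def E_expand zeta8 by simp
qed

lemma pi1_nz: "pi1 \<noteq> 0"
  unfolding pi1_def using zeta8 by auto

lemma E_smult: "E (\<lambda>t. k * d t) = of_int k * E d"
  unfolding E_def by (simp add: sum_distrib_left algebra_simps)

lemma pow_split: fixes n :: nat assumes "2 \<le> n" shows "(2::complex)^n = 4 * 2^(n-2)"
proof -
  obtain m where "n = m + 2" using assms by (metis le_add_diff_inverse2)
  then show ?thesis by (simp add: power_add)
qed

lemma even_lemma:
  assumes h: "E s * cnj (E s) = 2 ^ n" and n2: "n \<ge> 2"
  shows "\<forall>t<8. even (s t)"
proof -
  have key: "k \<le> 8 \<Longrightarrow> (\<exists>j<k. \<exists>w. Uf w \<and> E s = pi1^j * w) \<or> (\<exists>w\<in>ZZ. E s = pi1^k * w)" for k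
  proof (induction k)
    case 0 then show ?case by (intro disjI2 bexI[of _ "E s"]) auto
  next
    case (Suc k)
    then have "(\<exists>j<k. \<exists>w. Uf w \<and> E s = pi1^j * w) \<or> (\<exists>w\<in>ZZ. E s = pi1^k * w)" by simp
    then show ?case
    proof
      assume "\<exists>j<k. \<exists>w. Uf w \<and> E s = pi1^j * w" then show ?case using less_SucI by blast
    next
      assume "\<exists>w\<in>ZZ. E s = pi1^k * w"
      then obtain w where w: "w \<in> ZZ" "E s = pi1^k * w" by blast
      from ZZ_split[OF w(1)] show ?case
      proof
        assume "pdiv w" then obtain w' where w': "w' \<in> ZZ" "w = pi1 * w'" unfolding pdiv_def by blast
        then have "E s = pi1^(Suc k) * w'" using w by simp
        then show ?case using w' by blast
      next
        assume "Uf w" then show ?case using w by blast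
      qed
    qed
  qed
  from key[OF le_refl] show ?thesis
  proof
    assume "\<exists>j<8. \<exists>w. Uf w \<and> E s = pi1^j * w"
    then obtain j w where j: "j < 8" and w: "Uf w" "E s = pi1^j * w" by blast
    define V where "V = (zeta^7) ^ j * (w * cnj w)"
    have UV: "Uf V" unfolding V_def using Uf_mult Uf_pow Uf_zeta Uf_cnj w(1) by simp
    have "cnj (E s) = cnj (pi1^j) * cnj w" using w(2) by simp
    also have "cnj (pi1^j) = (cnj pi1)^j" by (rule complex_cnj_power)
    also have "\<dots> = (pi1 * zeta^7)^j" by (simp only: cnj_pi1)
    finally have C: "cnj (E s) = pi1^j * (zeta^7)^j * cnj w" by (simp add: power_mult_distrib)
    have "E s * cnj (E s) = pi1^j * pi1^j * V" unfolding C unfolding w(2) V_def by (simp only: mult_ac)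
    also have "pi1^j * pi1^j = pi1^(2*j)" by (simp add: power_add[symmetric] mult_2)
    finally have A: "E s * cnj (E s) = pi1^(2*j) * V" .
    define X where "X = etac^2 * of_int (2^(n-2))"
    have e16: "16 - 2*j = Suc (15 - 2*j)" using j by simp
    have "(2::complex)^n = 2^2 * 2^(n-2)" using pow_split[OF n2] by simp
    also have "\<dots> = (pi1^8 * etac)^2 * 2^(n-2)" using two_eq by simp
    also have "\<dots> = pi1^16 * X" unfolding X_def by (simp add: power_mult_distrib power_mult[symmetric])
    also have "pi1^16 = pi1^(2*j) * pi1^(16 - 2*j)" using j by (simp add: power_add[symmetric])
    finally have B: "(2::complex)^n = pi1^(2*j) * pi1^(16 - 2*j) * X" .
    have "pi1^(2*j) * V = pi1^(2*j) * (pi1^(16 - 2*j) * X)" using A h B by (simp only: mult.assoc)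
    moreover have "pi1^(2*j) \<noteq> 0" using pi1_nz by simp
    ultimately have "V = pi1^(16 - 2*j) * X" by (metis mult_left_cancel)
    also have "\<dots> = pi1 * (pi1^(15 - 2*j) * X)" unfolding e16 by (simp only: power_Suc mult.assoc)
    finally have VV: "V = pi1 * (pi1^(15 - 2*j) * X)" .
    have "pi1^(15 - 2*j) * X \<in> ZZ" unfolding X_def
      by (intro ZZ_mult ZZ_pow ZZ_pi1 ZZ_etac ZZ_int)
    then have "pdiv V" unfolding pdiv_def using VV by blast
    then show ?thesis using Uf_not_pdiv UV by blast
  next
    assume "\<exists>w\<in>ZZ. E s = pi1^8 * w"
    then obtain w where w: "w \<in> ZZ" "E s = pi1^8 * w" by blast
    have "E (\<lambda>t. [0, -4, 14, -28, 35, -28, 14, -4] ! t) * w \<in> ZZ" using w(1) ZZ_mult ZZ_E by blast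
    then obtain d where d: "E (\<lambda>t. [0, -4, 14, -28, 35, -28, 14, -4] ! t) * w = E d" unfolding ZZ_def by auto
    have "E s = E (\<lambda>t. 2 * d t)" unfolding E_smult using w(2) pi8_eq d by (simp add: algebra_simps)
    from E_inj[OF this] show ?thesis by auto
  qed
qed

lemma sumsq_le: fixes a b :: int shows "a^2 \<le> 2 \<Longrightarrow> \<bar>a\<bar> \<le> 1"
proof (rule ccontr)
  assume "a^2 \<le> 2" "\<not> \<bar>a\<bar> \<le> 1"
  then have "\<bar>a\<bar> \<ge> 2" by simp
  then have "\<bar>a\<bar> * \<bar>a\<bar> \<ge> 2 * 2" by (meson mult_mono' order_trans zero_le_numeral)
  then show False using \<open>a^2 \<le> 2\<close> by (simp add: power2_eq_square abs_mult[symmetric])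
qed

lemma descent: "E s * cnj (E s) = 2^n \<Longrightarrow> \<forall>t<8. \<bar>s t\<bar> = 0 \<or> \<bar>s t\<bar> = 2^(n div 2)"
proof (induction n arbitrary: s rule: less_induct)
  case (less n s)
  show ?case
  proof (cases "n \<ge> 2")
    case True
    have ev: "\<forall>t<8. even (s t)" using even_lemma less.prems True by blast
    define d where "d t = s t div 2" for t
    have "E s = E (\<lambda>t. 2 * d t)" using ev by (intro E_cong) (simp add: d_def)
    then have Es: "E s = 2 * E d" using E_smult[of 2 d] by simp
    have p2: "(2::complex)^n = 4 * 2^(n-2)" using pow_split True by simp
    have "(4::complex) * (E d * cnj (E d)) = 4 * 2^(n-2)"
      using less.prems p2 unfolding Es by (simp add: algebra_simps)
    then have "E d * cnj (E d) = 2^(n-2)" by simp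
    then have IH: "\<forall>t<8. \<bar>d t\<bar> = 0 \<or> \<bar>d t\<bar> = 2^((n-2) div 2)" using less.IH[of "n-2" d] True by simp
    have nd: "(n - 2) div 2 + 1 = n div 2" using True by simp
    show ?thesis
    proof (intro allI impI)
      fix t :: nat assume t: "t < 8"
      have st: "s t = 2 * d t" using ev t d_def by simp
      from IH t have "\<bar>d t\<bar> = 0 \<or> \<bar>d t\<bar> = 2^((n-2) div 2)" by blast
      then show "\<bar>s t\<bar> = 0 \<or> \<bar>s t\<bar> = 2^(n div 2)"
        unfolding st using nd by (auto simp: abs_mult power_Suc[symmetric])
    qed
  next
    case False
    have "E (mulc s (cjc s)) = E (\<lambda>t. if t = 0 then 2^n else 0)"
      using less.prems E_mul E_cnj E_const[of "2^n"] by simp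
    from E_inj[OF this] have "mulc s (cjc s) 0 = 2^n" by auto
    then have sq: "(s 0)^2 + (s 1)^2 + (s 2)^2 + (s 3)^2 + (s 4)^2 + (s 5)^2 + (s 6)^2 + (s 7)^2 = 2^n"
      by (simp add: mulc_def cjc_def power2_eq_square)
    have "n = 0 \<or> n = 1" using False by auto
    then have "(2::int)^n \<le> 2" by auto
    have nn: "\<And>x::int. x^2 \<ge> 0" by simp
    have le: "(s t)^2 \<le> 2" if "t < 8" for t
    proof -
      have "t = 0 \<or> t = 1 \<or> t = 2 \<or> t = 3 \<or> t = 4 \<or> t = 5 \<or> t = 6 \<or> t = 7" using that by auto
      then show ?thesis using sq \<open>(2::int)^n \<le> 2\<close> nn[of "s 0"] nn[of "s 1"] nn[of "s 2"] nn[of "s 3"]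
        nn[of "s 4"] nn[of "s 5"] nn[of "s 6"] nn[of "s 7"] by (elim disjE; hypsubst; linarith)
    qed
    have "n div 2 = 0" using False by simp
    then show ?thesis using le sumsq_le by fastforce
  qed
qed

lemma dotp_append:
  assumes "length u = length x"
  shows "dotp (u @ v) (x @ y) = (dotp u x \<noteq> dotp v y)"
proof -
  let ?n = "length x"
  define A where "A = {i. i < length x \<and> i < length u \<and> u ! i \<and> x ! i}"
  define B where "B = {i. i < length y \<and> i < length v \<and> v ! i \<and> y ! i}"
  have S: "{i. i < length (x @ y) \<and> i < length (u @ v) \<and> (u @ v) ! i \<and> (x @ y) ! i} = A \<union> (\<lambda>i. i + ?n) ` B"
  proof (rule set_eqI)
    fix i
    show "i \<in> {i. i < length (x @ y) \<and> i < length (u @ v) \<and> (u @ v) ! i \<and> (x @ y) ! i} \<longleftrightarrow> i \<in> A \<union> (\<lambda>i. i + ?n) ` B"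
    proof (cases "i < ?n")
      case True then show ?thesis using assms by (auto simp: A_def B_def nth_append)
    next
      case False
      have img: "i \<in> (\<lambda>i. i + ?n) ` B \<longleftrightarrow> i - ?n \<in> B"
      proof
        assume "i \<in> (\<lambda>i. i + ?n) ` B" then show "i - ?n \<in> B" by auto
      next
        assume "i - ?n \<in> B"
        moreover have "i = (i - ?n) + ?n" using False by simp
        ultimately show "i \<in> (\<lambda>i. i + ?n) ` B" by (rule rev_image_eqI)
      qed
      have nA: "i \<notin> A" using False by (simp add: A_def)
      show ?thesis unfolding Un_iff img using nA False assms by (auto simp: B_def nth_append)
    qed
  qed
  have fA: "finite A" unfolding A_def by simp
  have fB: "finite B" unfolding B_def by simp
  have dis: "A \<inter> (\<lambda>i. i + ?n) ` B = {}" by (auto simp: A_def)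
  have "card (A \<union> (\<lambda>i. i + ?n) ` B) = card A + card B"
    using card_Un_disjoint[OF fA _ dis] fB by (simp add: card_image inj_on_def)
  then show ?thesis unfolding dotp_def S using A_def B_def by simp
qed

lemma dotp_nil: "dotp [] [] = False" unfolding dotp_def by simp

lemma dotp_single: "dotp [a] [b] = (a \<and> b)"
proof -
  have "{i. i < 1 \<and> i < 1 \<and> [a] ! i \<and> [b] ! i} = (if a \<and> b then {0} else {})" by auto
  then show ?thesis unfolding dotp_def by simp
qed

lemma dotp3: "dotp [a1, a2, a3] [b1, b2, b3] = (((a1 \<and> b1) \<noteq> (a2 \<and> b2)) \<noteq> (a3 \<and> b3))"
proof -
  have "dotp ([a1] @ [a2] @ [a3]) ([b1] @ [b2] @ [b3]) = (dotp [a1] [b1] \<noteq> (dotp [a2] [b2] \<noteq> dotp [a3] [b3]))"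
    by (simp only: dotp_append length_Cons list.size)
  then show ?thesis by (simp add: dotp_single) blast
qed

lemma finite_vecs: "finite (vecs m)"
proof -
  have "vecs m = {xs. set xs \<subseteq> UNIV \<and> length xs = m}" unfolding vecs_def by simp
  then show ?thesis using finite_lists_length_eq[of "UNIV :: bool set" m] by simp
qed

lemma vecs3: "vecs 3 = {[b1, b2, b3] | b1 b2 b3. True}"
proof (rule set_eqI)
  fix xs :: "bool list"
  show "xs \<in> vecs 3 \<longleftrightarrow> xs \<in> {[b1, b2, b3] | b1 b2 b3. True}"
  proof
    assume "xs \<in> vecs 3"
    then have "length xs = 3" by (simp add: vecs_def)
    then have "xs = [xs!0, xs!1, xs!2]"
      by (intro nth_equalityI) (auto simp: less_Suc_eq eval_nat_numeral)
    then obtain b1 b2 b3 where "xs = [b1, b2, b3]" by blast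
    then show "xs \<in> {[b1, b2, b3] | b1 b2 b3. True}" by blast
  qed (auto simp: vecs_def)
qed

lemma vecs3_explicit: "vecs 3 = {[False,False,False],[False,False,True],[False,True,False],[False,True,True],
   [True,False,False],[True,False,True],[True,True,False],[True,True,True]}"
  unfolding vecs3 by auto

lemma vecs_split: "vecs (n + 3) = (\<lambda>(x, y). x @ y) ` (vecs n \<times> vecs 3)"
proof (rule set_eqI)
  fix z :: "bool list"
  show "z \<in> vecs (n + 3) \<longleftrightarrow> z \<in> (\<lambda>(x, y). x @ y) ` (vecs n \<times> vecs 3)"
  proof
    assume "z \<in> vecs (n + 3)"
    then have "take n z \<in> vecs n" "drop n z \<in> vecs 3" "z = take n z @ drop n z" by (auto simp: vecs_def)
    then show "z \<in> (\<lambda>(x, y). x @ y) ` (vecs n \<times> vecs 3)"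
      by (intro image_eqI[of _ _ "(take n z, drop n z)"]) auto
  qed (auto simp: vecs_def)
qed

lemma inj_split: "inj_on (\<lambda>(x, y). x @ y) (vecs n \<times> vecs 3)"
  by (auto simp: inj_on_def vecs_def)

definition sg :: "bool \<Rightarrow> int" where "sg b = (if b then -1 else 1)"

definition Sv :: "nat \<Rightarrow> (bool list \<Rightarrow> bool) \<Rightarrow> (bool list \<Rightarrow> bool) \<Rightarrow> (bool list \<Rightarrow> bool) \<Rightarrow> (bool list \<Rightarrow> bool)
   \<Rightarrow> bool list \<Rightarrow> bool \<Rightarrow> bool \<Rightarrow> bool \<Rightarrow> int" where
  "Sv n a1 a2 a3 a4 u b1 b2 b3 =
     (\<Sum>x\<in>{x \<in> vecs n. a1 x = b1 \<and> a2 x = b2 \<and> a3 x = b3}. sg (a4 x) * sg (dotp u x))"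

lemma pow_sg: "(-1::int) ^ (of_bool P + of_bool Q) = sg P * sg Q"
  by (cases P; cases Q) (simp_all add: sg_def)

lemma inner3: "(\<Sum>y\<in>vecs 3. sg (((y!0 \<and> c1) \<noteq> (y!1 \<and> c2)) \<noteq> ((y!2 \<and> c3) \<noteq> c4)) * sg (dotp [v1,v2,v3] y))
   = (if c1 = v1 \<and> c2 = v2 \<and> c3 = v3 then 8 * sg c4 else 0)"
  unfolding vecs3_explicit
  by (cases c1; cases c2; cases c3; cases c4; cases v1; cases v2; cases v3) (simp_all add: dotp3 sg_def)

lemma walsh_gray:
  assumes u: "u \<in> vecs n" and v: "v \<in> vecs 3"
  shows "walsh (n+3) (gray16 n a1 a2 a3 a4) (u @ v) = 8 * Sv n a1 a2 a3 a4 u (v!0) (v!1) (v!2)"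
proof -
  obtain v1 v2 v3 where vv: "v = [v1, v2, v3]" using v vecs3 by blast
  let ?F = "\<lambda>z. (-1::int) ^ (of_bool (gray16 n a1 a2 a3 a4 z) + of_bool (dotp (u @ v) z))"
  have "walsh (n+3) (gray16 n a1 a2 a3 a4) (u @ v) = (\<Sum>z\<in>vecs (n+3). ?F z)" unfolding walsh_def ..
  also have "\<dots> = (\<Sum>p\<in>vecs n \<times> vecs 3. ?F (case p of (x, y) \<Rightarrow> x @ y))"
    unfolding vecs_split by (subst sum.reindex[OF inj_split]) (simp add: comp_def)
  also have "\<dots> = (\<Sum>x\<in>vecs n. \<Sum>y\<in>vecs 3. ?F (x @ y))"
    by (simp add: sum.cartesian_product split_def)
  also have "\<dots> = (\<Sum>x\<in>vecs n. (if a1 x = v1 \<and> a2 x = v2 \<and> a3 x = v3 then 8 * (sg (a4 x) * sg (dotp u x)) else 0))"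
  proof (rule sum.cong[OF refl])
    fix x assume x: "x \<in> vecs n"
    have "(\<Sum>y\<in>vecs 3. ?F (x @ y)) = (\<Sum>y\<in>vecs 3. sg (dotp u x) *
        (sg (((y!0 \<and> a1 x) \<noteq> (y!1 \<and> a2 x)) \<noteq> ((y!2 \<and> a3 x) \<noteq> a4 x)) * sg (dotp [v1,v2,v3] y)))"
    proof (rule sum.cong[OF refl])
      fix y assume y: "y \<in> vecs 3"
      have lx: "length x = n" "length u = n" using x u by (auto simp: vecs_def)
      have g: "gray16 n a1 a2 a3 a4 (x @ y) = (((y!0 \<and> a1 x) \<noteq> (y!1 \<and> a2 x)) \<noteq> ((y!2 \<and> a3 x) \<noteq> a4 x))"
        unfolding gray16_def using lx by simp
      have d: "dotp (u @ v) (x @ y) = (dotp u x \<noteq> dotp [v1,v2,v3] y)"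
        using dotp_append[of u x v y] lx vv by simp
      show "?F (x @ y) = sg (dotp u x) *
        (sg (((y!0 \<and> a1 x) \<noteq> (y!1 \<and> a2 x)) \<noteq> ((y!2 \<and> a3 x) \<noteq> a4 x)) * sg (dotp [v1,v2,v3] y))"
        unfolding g d pow_sg by (simp add: sg_def)
    qed
    also have "\<dots> = sg (dotp u x) * (if a1 x = v1 \<and> a2 x = v2 \<and> a3 x = v3 then 8 * sg (a4 x) else 0)"
      unfolding sum_distrib_left[symmetric] inner3 by simp
    finally show "(\<Sum>y\<in>vecs 3. ?F (x @ y)) = (if a1 x = v1 \<and> a2 x = v2 \<and> a3 x = v3 then 8 * (sg (a4 x) * sg (dotp u x)) else 0)"
      by simp
  qed
  also have "\<dots> = 8 * Sv n a1 a2 a3 a4 u v1 v2 v3"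
    unfolding Sv_def sum.inter_filter[OF finite_vecs] sum_distrib_left by (rule sum.cong) auto
  finally show ?thesis using vv by simp
qed

lemma bits3: fixes t :: nat assumes "t < 8"
  shows "(of_bool b1 + 2 * of_bool b2 + 4 * of_bool b3 = t) \<longleftrightarrow> (b1 = odd t \<and> b2 = odd (t div 2) \<and> b3 = odd (t div 4))"
proof -
  have "t = 0 \<or> t = 1 \<or> t = 2 \<or> t = 3 \<or> t = 4 \<or> t = 5 \<or> t = 6 \<or> t = 7" using assms by auto
  then show ?thesis by (elim disjE; cases b1; cases b2; cases b3) simp_all
qed

lemma neg1_pow_bool: "(-1::complex) ^ (of_bool b) = of_int (sg b)"
  by (cases b) (simp_all add: sg_def)

lemma gwalsh_E: "gwalsh n 16 (\<lambda>x. of_bool (a1 x) + 2 * of_bool (a2 x) + 4 * of_bool (a3 x) + 8 * of_bool (a4 x)) u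
   = E (\<lambda>t. Sv n a1 a2 a3 a4 u (odd t) (odd (t div 2)) (odd (t div 4)))"
proof -
  define tx :: "bool list \<Rightarrow> nat" where "tx x = of_bool (a1 x) + 2 * of_bool (a2 x) + 4 * of_bool (a3 x)" for x
  define h where "h x = of_int (sg (a4 x) * sg (dotp u x)) * zeta ^ tx x" for x
  have txl: "tx x < 8" for x unfolding tx_def by (cases "a1 x"; cases "a2 x"; cases "a3 x") simp_all
  have trm: "cis (2 * pi * real ((of_bool (a1 x) + 2 * of_bool (a2 x) + 4 * of_bool (a3 x) + 8 * of_bool (a4 x)) mod 16) / real (16::nat))
      * (-1) ^ (of_bool (dotp u x)) = h x" for x
  proof -
    let ?k = "of_bool (a1 x) + 2 * of_bool (a2 x) + 4 * of_bool (a3 x) + 8 * of_bool (a4 x) :: nat"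
    have k16: "?k < 16" by (cases "a1 x"; cases "a2 x"; cases "a3 x"; cases "a4 x") simp_all
    have "cis (2 * pi * real (?k mod 16) / real (16::nat)) = zeta ^ ?k"
      using k16 unfolding zeta_pow by (simp add: field_simps)
    also have "zeta ^ ?k = zeta ^ tx x * of_int (sg (a4 x))"
    proof -
      have zk: "?k = tx x + 8 * of_bool (a4 x)" unfolding tx_def by simp
      have "zeta ^ ?k = zeta ^ tx x * (zeta ^ 8) ^ (of_bool (a4 x))"
        unfolding zk by (simp add: power_add power_mult)
      then show ?thesis unfolding zeta8 neg1_pow_bool .
    qed
    finally show ?thesis unfolding h_def neg1_pow_bool by (simp add: algebra_simps)
  qed
  have "gwalsh n 16 (\<lambda>x. of_bool (a1 x) + 2 * of_bool (a2 x) + 4 * of_bool (a3 x) + 8 * of_bool (a4 x)) u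
      = (\<Sum>x\<in>vecs n. h x)" unfolding gwalsh_def using trm by simp
  also have "\<dots> = (\<Sum>t\<in>{..<8}. \<Sum>x\<in>{x. x \<in> vecs n \<and> tx x = t}. h x)"
    by (rule sum.group[symmetric]) (use finite_vecs txl in auto)
  also have "\<dots> = E (\<lambda>t. Sv n a1 a2 a3 a4 u (odd t) (odd (t div 2)) (odd (t div 4)))"
    unfolding E_def
  proof (rule sum.cong[OF refl])
    fix t :: nat assume t: "t \<in> {..<8}"
    have set: "{x. x \<in> vecs n \<and> tx x = t} = {x \<in> vecs n. a1 x = odd t \<and> a2 x = odd (t div 2) \<and> a3 x = odd (t div 4)}"
      using bits3[of t] t unfolding tx_def by auto
    have "(\<Sum>x\<in>{x. x \<in> vecs n \<and> tx x = t}. h x) = (\<Sum>x\<in>{x. x \<in> vecs n \<and> tx x = t}. of_int (sg (a4 x) * sg (dotp u x)) * zeta ^ t)"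
      unfolding h_def by (rule sum.cong) auto
    also have "\<dots> = of_int (Sv n a1 a2 a3 a4 u (odd t) (odd (t div 2)) (odd (t div 4))) * zeta ^ t"
      unfolding Sv_def set by (simp add: sum_distrib_right)
    finally show "(\<Sum>x\<in>{x. x \<in> vecs n \<and> tx x = t}. h x) = of_int (Sv n a1 a2 a3 a4 u (odd t) (odd (t div 2)) (odd (t div 4))) * zeta ^ t" .
  qed
  finally show ?thesis .
qed

lemma sq_powr: "(2 powr (real n / 2))^2 = (2::real)^n"
proof -
  have "(2 powr (real n / 2))^2 = 2 powr (real n / 2) * 2 powr (real n / 2)" by (simp add: power2_eq_square)
  also have "\<dots> = 2 powr (real n)" by (simp add: powr_add[symmetric])
  also have "\<dots> = 2^n" by (simp add: powr_realpow)
  finally show ?thesis .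
qed

lemma powr_k: assumes "(real m + real s) / 2 = real k" shows "(2::real) powr ((real m + real s) / 2) = 2^k"
  using assms by (simp add: powr_realpow)

theorem mainTheorem12:
  fixes n :: nat and a1 a2 a3 a4 :: "bool list \<Rightarrow> bool"
  assumes "gbent n 16 (\<lambda>x. of_bool (a1 x) + 2 * of_bool (a2 x) + 4 * of_bool (a3 x) + 8 * of_bool (a4 x))"
  shows "(odd n \<longrightarrow> semibent (n + 3) (gray16 n a1 a2 a3 a4))
       \<and> (even n \<longrightarrow> plateaued (n + 3) 3 (gray16 n a1 a2 a3 a4))"
proof -
  let ?g = "gray16 n a1 a2 a3 a4"
  let ?S = "\<lambda>u t. Sv n a1 a2 a3 a4 u (odd t) (odd (t div 2)) (odd (t div 4))"
  have S: "\<bar>?S u t\<bar> = 0 \<or> \<bar>?S u t\<bar> = 2^(n div 2)" if u: "u \<in> vecs n" and t: "t < 8" for u and t :: nat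
  proof -
    let ?z = "E (?S u)"
    have "cmod ?z = 2 powr (real n / 2)" using assms u unfolding gbent_def gwalsh_E by blast
    then have "?z * cnj ?z = of_real ((2 powr (real n / 2))^2)" using complex_norm_square[of ?z] by simp
    also have "\<dots> = 2^n" unfolding sq_powr by simp
    finally show ?thesis using descent[of "?S u" n] t by blast
  qed
  have W: "\<bar>real_of_int (walsh (n+3) ?g w)\<bar> \<in> {0, 2^(n div 2 + 3)}" if w: "w \<in> vecs (n+3)" for w
  proof -
    define u where "u = take n w"
    define v where "v = drop n w"
    have u: "u \<in> vecs n" and v: "v \<in> vecs 3" and wuv: "w = u @ v" using w by (auto simp: vecs_def u_def v_def)
    define t :: nat where "t = of_bool (v!0) + 2 * of_bool (v!1) + 4 * of_bool (v!2)"
    have t8: "t < 8" unfolding t_def by (cases "v!0"; cases "v!1"; cases "v!2") simp_all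
    have bt: "v!0 = odd t \<and> v!1 = odd (t div 2) \<and> v!2 = odd (t div 4)" using bits3[OF t8] t_def by simp
    have "walsh (n+3) ?g w = 8 * ?S u t" unfolding wuv walsh_gray[OF u v] using bt by simp
    then have "\<bar>real_of_int (walsh (n+3) ?g w)\<bar> = 8 * real_of_int \<bar>?S u t\<bar>" by simp
    moreover have "real_of_int \<bar>?S u t\<bar> = 0 \<or> real_of_int \<bar>?S u t\<bar> = 2^(n div 2)"
    proof (cases "\<bar>?S u t\<bar> = 0")
      case True then show ?thesis by simp
    next
      case False
      then have "\<bar>?S u t\<bar> = 2^(n div 2)" using S[OF u t8] by blast
      then have "real_of_int \<bar>?S u t\<bar> = real_of_int (2^(n div 2))" by (simp only:)
      then show ?thesis by simp
    qed
    ultimately show ?thesis by (auto simp: power_add)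
  qed
  show ?thesis
  proof (intro conjI impI)
    assume "odd n"
    then obtain k where nk: "n = 2*k+1" by (rule oddE)
    then have "n div 2 = k" by simp
    then have e: "(real (n+3) + real 2) / 2 = real (n div 2 + 3)" using nk by (simp add: field_simps)
    show "semibent (n + 3) ?g" unfolding semibent_def plateaued_def
      using \<open>odd n\<close> W powr_k[OF e] by simp
  next
    assume "even n"
    then obtain k where nk: "n = 2*k" by (rule evenE)
    then have "n div 2 = k" by simp
    then have e: "(real (n+3) + real 3) / 2 = real (n div 2 + 3)" using nk by (simp add: field_simps)
    show "plateaued (n + 3) 3 ?g" unfolding plateaued_def using W powr_k[OF e] by simp
  qed
qed
end
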